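(* Let $0<\delta<\tfrac12$, $|\nu|<1-2\delta$, $|\mu|<1$, and let $m\ge1$. Set $\delta_1=\frac{2\delta}{1+\nu}$ and $\delta_4=\frac{2\delta}{1-\nu}$. Then $$\frac{1}{|\log(1-\delta)|}>\frac{1}{|\log(1-\delta_1)|}+\frac{1}{|\log(1-\delta_4)|},$$ and consequently $$\frac{\log\big[\frac m2(1+\mu)\big]}{|\log(1-\delta_1)|}+\frac{\log\big[\frac m2(1-\mu)\big]}{|\log(1-\delta_4)|}<\frac{\log m}{|\log(1-\delta)|}.$$
   Context: $\log$ is the natural logarithm. The left-hand side of the second inequality is the sum of the bounds $\log(\#\text{rows})/|\log(1-\text{density})|$ applied separately to the two diagonal blocks of a perfectly block-diagonal $0$-$1$ matrix whose diagonal blocks have $\frac m2(1\pm\mu)$ rows, $\frac n2(1\pm\nu)$ columns and row densities $\delta_1,\delta_4$, while the right-hand side is the same bound for the whole matrix with density $\delta$. *)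

theory Defs
  imports "HOL-Analysis.Analysis"
begin

end

theory Submission
  imports Defs
begin

lemma ln_lt_aux: "0 < (s::real) \<Longrightarrow> s \<noteq> 1 \<Longrightarrow> ln s < s - 1"
  using ln_le_minus_one[of s] ln_eq_minus_one[of s] by fastforce

lemma phi_mono:
  fixes x y :: real
  assumes "0 < x" "x < y" "y < 1"
  shows "- ln (1 - x) / x < - ln (1 - y) / y"
proof -
  define A where "A = - ln (1 - x)"
  have "ln (1/(1-x)) < 1/(1-x) - 1" using assms by (intro ln_lt_aux) auto
  moreover have "ln (1/(1-x)) = A" using assms by (simp add: A_def ln_div)
  moreover have "1/(1-x) - 1 = x/(1-x)" using assms by (simp add: field_simps)
  ultimately have A1: "A < x/(1-x)" by simp
  have "ln ((1-y)/(1-x)) < (1-y)/(1-x) - 1" using assms by (intro ln_lt_aux) auto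
  moreover have "ln ((1-y)/(1-x)) = ln (1-y) - ln (1-x)" using assms by (simp add: ln_div)
  moreover have "(1-y)/(1-x) - 1 = - (y-x)/(1-x)" using assms by (simp add: field_simps)
  moreover have "(x-y)/(1-x) = -((y-x)/(1-x))" by (simp add: minus_divide_left)
  ultimately have B: "- ln (1-y) > A + (y-x)/(1-x)" unfolding A_def by linarith
  have "(y-x)*A < (y-x)*(x/(1-x))" using A1 assms by (intro mult_strict_left_mono) auto
  hence "(y-x)*A/x < (y-x)/(1-x)" using assms by (simp add: field_simps)
  hence "A + (y-x)*A/x < - ln (1-y)" using B by linarith
  moreover have "A + (y-x)*A/x = y * (A/x)" using assms by (simp add: field_simps)
  ultimately have "y*(A/x) < - ln(1-y)" by simp
  thus ?thesis using assms by (simp add: A_def field_simps)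
qed

lemma L_pos: "0 < (x::real) \<Longrightarrow> x < 1 \<Longrightarrow> 0 < - ln (1 - x)"
  by simp

theorem mainTheorem7:
  fixes \<delta> \<nu> \<mu> \<delta>\<^sub>1 \<delta>\<^sub>4 :: real and m :: nat
  assumes "0 < \<delta>" and "\<delta> < 1/2"
    and "\<bar>\<nu>\<bar> < 1 - 2*\<delta>" and "\<bar>\<mu>\<bar> < 1" and "m \<ge> 1"
    and "\<delta>\<^sub>1 = 2*\<delta> / (1 + \<nu>)" and "\<delta>\<^sub>4 = 2*\<delta> / (1 - \<nu>)"
  shows "1 / \<bar>ln (1 - \<delta>)\<bar> > 1 / \<bar>ln (1 - \<delta>\<^sub>1)\<bar> + 1 / \<bar>ln (1 - \<delta>\<^sub>4)\<bar>
    \<and> ln (real m / 2 * (1 + \<mu>)) / \<bar>ln (1 - \<delta>\<^sub>1)\<bar>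
          + ln (real m / 2 * (1 - \<mu>)) / \<bar>ln (1 - \<delta>\<^sub>4)\<bar>
         < ln (real m) / \<bar>ln (1 - \<delta>)\<bar>"
proof -
  define a where "a = \<delta>\<^sub>1"
  define b where "b = \<delta>\<^sub>4"
  have nu: "1 + \<nu> > 2*\<delta>" "1 - \<nu> > 2*\<delta>" using assms(3) by auto
  have nu1: "\<nu> < 1" "- \<nu> < 1" using assms(1,3) by auto
  have dn: "\<delta>*\<nu> < \<delta>*1" "\<delta>*(-\<nu>) < \<delta>*1" using nu1 assms(1)
    by (intro mult_strict_left_mono; simp)+
  have a01: "\<delta> < a" "a < 1" using nu dn assms(1,2) by (auto simp: a_def assms(6) field_simps)
  have b01: "\<delta> < b" "b < 1" using nu dn assms(1,2) by (auto simp: b_def assms(7) field_simps)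
  have harm: "1/a + 1/b = 1/\<delta>" using nu assms(1)
    by (simp add: a_def b_def assms(6,7) field_simps)
  define L where "L = (\<lambda>x::real. - ln (1 - x))"
  have Lp: "\<And>x. 0 < x \<Longrightarrow> x < 1 \<Longrightarrow> L x > 0" by (simp add: L_def)
  have abs: "\<And>x. 0 < x \<Longrightarrow> x < 1 \<Longrightarrow> \<bar>ln (1 - x)\<bar> = L x" using Lp by (simp add: L_def)
  have d1: "0 < \<delta>" "\<delta> < 1" using assms(1,2) by auto
  have ra: "\<delta> / L \<delta> > a / L a"
    using phi_mono[of \<delta> a] a01 d1 Lp[of \<delta>] Lp[of a] by (simp add: L_def field_simps)
  have rb: "\<delta> / L \<delta> > b / L b"
    using phi_mono[of \<delta> b] b01 d1 Lp[of \<delta>] Lp[of b] by (simp add: L_def field_simps)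
  have e: "1 / L \<delta> = (1/a) * (\<delta> / L \<delta>) + (1/b) * (\<delta> / L \<delta>)"
  proof -
    have "(1/a) * (\<delta> / L \<delta>) + (1/b) * (\<delta> / L \<delta>) = (1/a + 1/b) * (\<delta> / L \<delta>)"
      by (rule distrib_right[symmetric])
    also have "\<dots> = 1 / L \<delta>" using harm d1 by simp
    finally show ?thesis by simp
  qed
  have "(1/a) * (\<delta> / L \<delta>) > (1/a) * (a / L a)" using ra a01 d1 by (intro mult_strict_left_mono) auto
  moreover have "(1/b) * (\<delta> / L \<delta>) > (1/b) * (b / L b)" using rb b01 d1 by (intro mult_strict_left_mono) auto
  ultimately have first: "1 / L \<delta> > 1 / L a + 1 / L b" using e a01 b01 d1 by simp
  have mpos: "real m > 0" using assms(5) by simp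
  have lnm: "ln (real m) \<ge> 0" using assms(5) by simp
  have p: "ln (real m / 2 * (1 + \<mu>)) = ln (real m) + ln ((1+\<mu>)/2)"
  proof -
    have "real m / 2 * (1 + \<mu>) = real m * ((1 + \<mu>)/2)" by simp
    moreover have "(1 + \<mu>)/2 > 0" using assms(4) by auto
    ultimately show ?thesis using mpos ln_mult[of "real m" "(1 + \<mu>)/2"] by simp
  qed
  have q: "ln (real m / 2 * (1 - \<mu>)) = ln (real m) + ln ((1-\<mu>)/2)"
  proof -
    have "real m / 2 * (1 - \<mu>) = real m * ((1 - \<mu>)/2)" by simp
    moreover have "(1 - \<mu>)/2 > 0" using assms(4) by auto
    ultimately show ?thesis using mpos ln_mult[of "real m" "(1 - \<mu>)/2"] by simp
  qed
  have pn: "ln ((1+\<mu>)/2) < 0" "ln ((1-\<mu>)/2) < 0" using assms(4) by auto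
  have La: "L a > 0" "L b > 0" using Lp a01 b01 d1 by auto
  have "ln ((1+\<mu>)/2) / L a < 0" "ln ((1-\<mu>)/2) / L b < 0"
    using pn La by (auto simp: divide_neg_pos)
  moreover have "ln (real m) * (1 / L a + 1 / L b) \<le> ln (real m) * (1 / L \<delta>)"
    using first lnm by (intro mult_left_mono) auto
  ultimately have second: "(ln (real m) + ln ((1+\<mu>)/2)) / L a + (ln (real m) + ln ((1-\<mu>)/2)) / L b
      < ln (real m) / L \<delta>"
    by (simp add: add_divide_distrib ring_distribs)
  show ?thesis
    using first second p q abs[OF d1] abs[OF _ a01(2)] abs[OF _ b01(2)] a01 b01 d1
    by (simp add: a_def b_def)
qed

end
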